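(* Let $D:\mathbb R^2\setminus\{0\}\to\mathbb R$ be nonnegative, bounded and continuously differentiable, and consider $\ddot x+D(x)\dot x=-x/|x|^3$. Let $r_B,T>0$ and let $x_n:[-T,0]\to\mathbb R^2\setminus\{0\}$ be solutions with $r_n(0)=r_B$ and $\dot r_n(0)\to-\infty$, where $r_n=|x_n|$. Then $\dot r_n(t)\to-\infty$ as $n\to+\infty$, uniformly with respect to $t\in[-T,0]$. *)

theory Defs
  imports "HOL-Analysis.Analysis"
begin

definition C1_on_punctured :: "(real^2 \<Rightarrow> real) \<Rightarrow> bool" where
  "C1_on_punctured D \<longleftrightarrow>
     (\<exists>D' :: (real^2) \<Rightarrow> ((real^2) \<Rightarrow>\<^sub>L real).
        (\<forall>z. z \<noteq> 0 \<longrightarrow> (D has_derivative blinfun_apply (D' z)) (at z)) \<and>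
        continuous_on (UNIV - {0}) D')"

definition is_solution ::
  "(real^2 \<Rightarrow> real) \<Rightarrow> real \<Rightarrow> (real \<Rightarrow> real^2) \<Rightarrow> (real \<Rightarrow> real^2) \<Rightarrow> bool" where
  "is_solution D T x v \<longleftrightarrow>
     (\<forall>t\<in>{-T..0}. x t \<noteq> 0 \<and>
        (x has_vector_derivative v t) (at t within {-T..0}) \<and>
        (v has_vector_derivative
            (- (D (x t) *\<^sub>R v t) - (1 / norm (x t) ^ 3) *\<^sub>R x t)) (at t within {-T..0}))"

end

theory Submission
  imports Defs
begin


lemma norm_deriv:
  fixes x :: "real \<Rightarrow> real^2"
  assumes "(x has_vector_derivative xv) (at u within S)" "x u \<noteq> 0"
  shows "((\<lambda>t. norm (x t)) has_real_derivative (x u \<bullet> xv) / norm (x u)) (at u within S)"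
proof -
  have "((\<lambda>t. norm (x t)) has_derivative (\<lambda>h. h * (xv \<bullet> sgn (x u)))) (at u within S)"
    using has_derivative_compose[OF assms(1)[unfolded has_vector_derivative_def] has_derivative_norm[OF assms(2)]]
    by (simp add: o_def)
  then show ?thesis
    unfolding has_field_derivative_def
    by (rule has_derivative_eq_rhs) (auto simp: fun_eq_iff sgn_div_norm inner_commute field_simps)
qed

lemma f_deriv:
  fixes x v :: "real \<Rightarrow> real^2"
  assumes "(x has_vector_derivative v u) (at u within S)" "(v has_vector_derivative a) (at u within S)" "x u \<noteq> 0"
  shows "((\<lambda>t. (x t \<bullet> v t) / norm (x t)) has_real_derivative
     ((v u \<bullet> v u + x u \<bullet> a) * norm (x u) - (x u \<bullet> v u) * ((x u \<bullet> v u) / norm (x u))) / (norm (x u))^2) (at u within S)"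
proof -
  have p: "((\<lambda>t. x t \<bullet> v t) has_real_derivative (v u \<bullet> v u + x u \<bullet> a)) (at u within S)"
  proof -
    have "((\<lambda>t. x t \<bullet> v t) has_derivative (\<lambda>h. x u \<bullet> (h *\<^sub>R a) + (h *\<^sub>R v u) \<bullet> v u)) (at u within S)"
      by (rule has_derivative_inner[OF assms(1)[unfolded has_vector_derivative_def] assms(2)[unfolded has_vector_derivative_def]])
    then show ?thesis unfolding has_field_derivative_def
      by (rule has_derivative_eq_rhs) (auto simp: fun_eq_iff algebra_simps)
  qed
  have "norm (x u) \<noteq> 0" using assms(3) by simp
  from DERIV_divide[OF p norm_deriv[OF assms(1,3)] this] show ?thesis
    by (simp add: power2_eq_square)
qed

lemma alg:
  fixes r rB p w Dz :: real
  assumes "rB > 0" "r \<ge> rB" "p \<le> 0" "Dz \<ge> 0" "p^2 \<le> r^2 * w"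
  shows "((w + (- Dz * p - 1 / r)) * r - p * (p / r)) / r^2 + 1 / rB^2 \<ge> 0"
proof -
  have r: "r > 0" using assms by simp
  have e: "((w + (- Dz * p - 1 / r)) * r - p * (p / r)) / r^2 = (r^2*w - p^2)/r^3 - Dz*p/r - 1/r^2"
    using r by (simp add: field_simps power2_eq_square power3_eq_cube)
  have a1: "(r^2*w - p^2)/r^3 \<ge> 0" using assms r by simp
  have a2: "- Dz*p/r \<ge> 0" using assms r by (simp add: mult_nonneg_nonpos divide_nonpos_pos)
  have a3: "1/r^2 \<le> 1/rB^2" using assms r
    by (intro divide_left_mono power_mono) auto
  show ?thesis unfolding e using a1 a2 a3 by linarith
qed

lemma key:
  fixes D :: "real^2 \<Rightarrow> real" and x v :: "real \<Rightarrow> real^2" and rB T M :: real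
  assumes D_nonneg: "\<forall>z. z \<noteq> 0 \<longrightarrow> D z \<ge> 0"
    and rB_pos: "rB > 0" and T_pos: "T > 0"
    and sol: "is_solution D T x v"
    and r0: "norm (x 0) = rB"
    and M: "M \<le> 0"
    and f0: "(x 0 \<bullet> v 0) / norm (x 0) < M - T / rB^2"
    and t: "t \<in> {-T..0}"
  shows "(x t \<bullet> v t) / norm (x t) < M"
proof (rule ccontr)
  define f where "f = (\<lambda>t. (x t \<bullet> v t) / norm (x t))"
  define a where "a = (\<lambda>t. - (D (x t) *\<^sub>R v t) - (1 / norm (x t) ^ 3) *\<^sub>R x t)"
  assume "\<not> ?thesis"
  hence ft: "M \<le> f t" unfolding f_def by simp
  have solt: "\<And>u. u \<in> {-T..0} \<Longrightarrow> x u \<noteq> 0 \<and> (x has_vector_derivative v u) (at u within {-T..0}) \<and>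
      (v has_vector_derivative a u) (at u within {-T..0})"
    using sol unfolding is_solution_def a_def by blast
  have fder: "\<And>u. u \<in> {-T..0} \<Longrightarrow> (f has_real_derivative
     ((v u \<bullet> v u + x u \<bullet> a u) * norm (x u) - (x u \<bullet> v u) * ((x u \<bullet> v u) / norm (x u))) / (norm (x u))^2) (at u within {-T..0})"
    unfolding f_def using solt f_deriv by blast
  have rder: "\<And>u. u \<in> {-T..0} \<Longrightarrow> ((\<lambda>t. norm (x t)) has_real_derivative f u) (at u within {-T..0})"
    unfolding f_def using solt norm_deriv by blast
  have fcont: "continuous_on {-T..0} f"
    using fder DERIV_continuous continuous_on_eq_continuous_within by blast
  have rcont: "continuous_on {-T..0} (\<lambda>t. norm (x t))"
    using rder DERIV_continuous continuous_on_eq_continuous_within by blast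
  define S where "S = {t..0} \<inter> f -` {M..}"
  have tS: "t \<in> S" using ft t unfolding S_def by auto
  have clS: "closed S" unfolding S_def
    by (rule continuous_closed_preimage) (use fcont t in \<open>auto intro: continuous_on_subset\<close>)
  have bS: "bdd_above S" unfolding S_def by (auto intro: bdd_aboveI[where M=0])
  define s0 where "s0 = Sup S"
  have s0S: "s0 \<in> S" unfolding s0_def using closed_contains_Sup[OF _ bS clS] tS by blast
  have fs0: "M \<le> f s0" and s0r: "t \<le> s0" "s0 \<le> 0" using s0S unfolding S_def by auto
  have after: "f u < M" if "s0 < u" "u \<le> 0" for u
  proof (rule ccontr)
    assume "\<not> f u < M"
    hence "u \<in> S" using that s0r unfolding S_def by auto
    hence "u \<le> s0" unfolding s0_def using bS by (simp add: cSup_upper)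
    thus False using that by simp
  qed
  have s0neg: "s0 < 0" using s0r f0 fs0 after unfolding f_def
    by (smt (verit) T_pos rB_pos divide_pos_pos zero_less_power)
  have tT: "-T \<le> t" using t by simp
  have rge: "norm (x u) \<ge> rB" if "s0 < u" "u \<le> 0" for u
  proof -
    have "- norm (x u) \<le> - norm (x 0)"
    proof (rule DERIV_nonneg_imp_increasing_open[where f="\<lambda>t. - norm (x t)"])
      show "u \<le> 0" by fact
      show "\<exists>y. ((\<lambda>t. - norm (x t)) has_real_derivative y) (at w) \<and> 0 \<le> y" if "u < w" "w < 0" for w
      proof -
        have w: "w \<in> {-T..0}" "-T < w" using that \<open>s0 < u\<close> s0r tT by auto
        have "((\<lambda>t. norm (x t)) has_real_derivative f w) (at w)"
          using rder[OF w(1)] at_within_Icc_at[OF w(2) that(2)] by simp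
        moreover have "f w < M" using after[of w] that \<open>s0 < u\<close> by simp
        ultimately show ?thesis using M by (intro exI[of _ "- f w"]) (auto intro: DERIV_minus)
      qed
      show "continuous_on {u..0} (\<lambda>t. - norm (x t))"
        using rcont that s0r tT by (intro continuous_on_minus) (auto intro: continuous_on_subset)
    qed
    thus ?thesis using r0 by simp
  qed
  have "f s0 + s0 / rB^2 \<le> f 0 + 0 / rB^2"
  proof (rule DERIV_nonneg_imp_increasing_open[where f="\<lambda>t. f t + t / rB^2"])
    show "s0 \<le> 0" by fact
    show "\<exists>y. ((\<lambda>t. f t + t / rB^2) has_real_derivative y) (at w) \<and> 0 \<le> y" if "s0 < w" "w < 0" for w
    proof -
      have w: "w \<in> {-T..0}" "-T < w" using that s0r tT by auto
      let ?d = "((v w \<bullet> v w + x w \<bullet> a w) * norm (x w) - (x w \<bullet> v w) * ((x w \<bullet> v w) / norm (x w))) / (norm (x w))^2"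
      have d1: "(f has_real_derivative ?d) (at w)"
        using fder[OF w(1)] at_within_Icc_at[OF w(2) that(2)] by simp
      have d2: "((\<lambda>t. f t + t / rB^2) has_real_derivative ?d + 1 / rB^2) (at w)"
        using DERIV_add[OF d1 DERIV_cdivide[OF DERIV_ident, of "rB^2"]] by simp
      have xw: "x w \<noteq> 0" using solt[OF w(1)] by blast
      have fw: "f w < M" using after that by simp
      have p: "x w \<bullet> v w \<le> 0"
      proof -
        have "(x w \<bullet> v w) / norm (x w) \<le> 0" using fw M unfolding f_def by simp
        thus ?thesis using xw by (simp add: divide_le_0_iff)
      qed
      have xa: "x w \<bullet> a w = - D (x w) * (x w \<bullet> v w) - 1 / norm (x w)"
      proof -
        have "x w \<bullet> a w = - D (x w) * (x w \<bullet> v w) - (1 / norm (x w) ^ 3) * (norm (x w))^2"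
          unfolding a_def by (simp add: inner_diff_right power2_norm_eq_inner)
        also have "(1 / norm (x w) ^ 3) * (norm (x w))^2 = 1 / norm (x w)"
          using xw by (simp add: field_simps power2_eq_square power3_eq_cube)
        finally show ?thesis .
      qed
      have cs: "(x w \<bullet> v w)^2 \<le> (norm (x w))^2 * (v w \<bullet> v w)"
      proof -
        have "\<bar>x w \<bullet> v w\<bar> \<le> norm (x w) * norm (v w)" by (rule Cauchy_Schwarz_ineq2)
        hence "\<bar>x w \<bullet> v w\<bar>^2 \<le> (norm (x w) * norm (v w))^2"
          by (intro power_mono) auto
        thus ?thesis by (simp add: power_mult_distrib power2_norm_eq_inner)
      qed
      have "?d + 1 / rB^2 \<ge> 0"
        unfolding xa
        by (rule alg[OF rB_pos rge[OF that(1) less_imp_le[OF that(2)]] p _ cs])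
           (use D_nonneg xw in auto)
      thus ?thesis using d2 by blast
    qed
    show "continuous_on {s0..0} (\<lambda>t. f t + t / rB^2)"
      using fcont s0r tT rB_pos by (intro continuous_intros) (auto intro: continuous_on_subset)
  qed
  hence "f s0 \<le> f 0 - s0 / rB^2" by simp
  moreover have "- s0 / rB^2 \<le> T / rB^2" using s0r tT rB_pos by (intro divide_right_mono) auto
  ultimately show False using fs0 f0 unfolding f_def by linarith
qed


theorem lemma7p1:
  fixes D :: "real^2 \<Rightarrow> real"
    and rB T :: real
    and x v :: "nat \<Rightarrow> real \<Rightarrow> real^2"
    and rd :: "nat \<Rightarrow> real \<Rightarrow> real"
  assumes D_nonneg: "\<forall>z. z \<noteq> 0 \<longrightarrow> D z \<ge> 0"
    and D_bounded: "bounded (D ` (UNIV - {0}))"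
    and D_C1: "C1_on_punctured D"
    and rB_pos: "rB > 0" and T_pos: "T > 0"
    and sol: "\<forall>n. is_solution D T (x n) (v n)"
    and rd_deriv: "\<forall>n. \<forall>t\<in>{-T..0}.
                     ((\<lambda>s. norm (x n s)) has_real_derivative rd n t) (at t within {-T..0})"
    and r0: "\<forall>n. norm (x n 0) = rB"
    and rd0: "filterlim (\<lambda>n. rd n 0) at_bot sequentially"
  shows "\<forall>M. \<exists>N. \<forall>n\<ge>N. \<forall>t\<in>{-T..0}. rd n t \<le> M"
  proof (intro allI)
  fix M :: real
  define M0 where "M0 = min M 0"
  have "\<forall>\<^sub>F n in sequentially. rd n 0 \<le> M0 - T / rB^2 - 1"
    using rd0 unfolding filterlim_at_bot by blast
  then obtain N where N: "\<And>n. n \<ge> N \<Longrightarrow> rd n 0 \<le> M0 - T / rB^2 - 1"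
    unfolding eventually_sequentially by blast
  have rdeq: "rd n t = (x n t \<bullet> v n t) / norm (x n t)" if "t \<in> {-T..0}" for n t
  proof -
    have s: "x n t \<noteq> 0 \<and> (x n has_vector_derivative v n t) (at t within {-T..0})"
      using sol that unfolding is_solution_def by blast
    have d1: "((\<lambda>s. norm (x n s)) has_vector_derivative (x n t \<bullet> v n t) / norm (x n t)) (at t within {-T..0})"
      using norm_deriv s has_real_derivative_iff_has_vector_derivative by blast
    have d2: "((\<lambda>s. norm (x n s)) has_vector_derivative rd n t) (at t within {-T..0})"
      using rd_deriv that has_real_derivative_iff_has_vector_derivative by blast
    show ?thesis
      using vector_derivative_unique_within_closed_interval[of "-T" 0 t, OF _ _ d2[unfolded cbox_interval[symmetric]] d1[unfolded cbox_interval[symmetric]]] that T_pos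
      by (simp add: cbox_interval)
  qed
  show "\<exists>N. \<forall>n\<ge>N. \<forall>t\<in>{-T..0}. rd n t \<le> M"
  proof (intro exI allI impI ballI)
    fix n t assume n: "N \<le> n" and t: "t \<in> {-T..0}"
    have "(x n 0 \<bullet> v n 0) / norm (x n 0) < M0 - T / rB^2"
      using N[OF n] rdeq[of 0 n] T_pos by simp
    hence "(x n t \<bullet> v n t) / norm (x n t) < M0"
      using key[where M=M0, OF D_nonneg rB_pos T_pos sol[rule_format, of n] r0[rule_format, of n] _ _ t]
      by (simp add: M0_def)
    thus "rd n t \<le> M" using rdeq[OF t] unfolding M0_def by simp
  qed
qed

end
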